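(* Let $(\alpha_n)_{n\ge0}$ be complex numbers with $|\alpha_n|<1$ and let $\mu_{n,r,s}$ be as in the context. For all nonnegative integers $n,r,s$, \[ \mu_{n,r,s}=\sum_{p\in\mathfrak{L}_{n,r,s}}\mathrm{wt}_L(p). \]
   Context: For a polynomial $f(z)=\sum_{k=0}^n a_kz^k$ of degree $n$, write $\overline{f}(z)=\sum_k\overline{a_k}z^k$ and $f^*(z)=z^n\overline{f}(1/z)$. Define monic $\Phi_n$ by $\Phi_0=1$, $\Phi_{n+1}(z)=z\Phi_n(z)-\overline{\alpha_n}\Phi_n^*(z)$. Let $\mathcal{L}$ be the unique linear functional on Laurent polynomials with $\mathcal{L}(1)=1$ and $\mathcal{L}(\Phi_m(z)\overline{\Phi_n}(1/z))=0$ for $m\neq n$; set $\langle f,g\rangle=\mathcal{L}(f(z)\overline{g}(1/z))$ and $\mu_{n,r,s}=\langle\Phi_s(z),z^n\Phi_r(z)\rangle/\langle\Phi_s,\Phi_s\rangle$. Set $\alpha_{-1}=-1$. A Łukasiewicz path is a finite sequence of lattice points in $\mathbb{Z}\times\mathbb{Z}_{\ge0}$ whose steps are of the form $(1,k)$ with $k\le 1$ integer; $\mathfrak{L}_{n,r,s}$ is the set of such paths from $(0,r)$ to $(n,s)$. The weight $\mathrm{wt}_L(p)$ is the product of the weights of the steps, where an up-step $(a,b)\to(a+1,b+1)$ has weight $1$ and a step $(a,b)\to(a+1,b-k)$, $k=0,1,\dots,b$, has weight $-\alpha_b\overline{\alpha_{b-k-1}}\prod_{j=b-k}^{b-1}(1-|\alpha_j|^2)$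 (the empty product being $1$). *)

theory Defs
  imports "HOL-Computational_Algebra.Polynomial" Complex_Main
begin

definition pconj :: "complex poly \<Rightarrow> complex poly" where
  "pconj p = map_poly cnj p"

text \<open>Reversed polynomial f^*(z) = z^n conj-f(1/z), n = degree f.\<close>
definition pstar :: "complex poly \<Rightarrow> complex poly" where
  "pstar p = reflect_poly (pconj p)"

text \<open>Monic orthogonal polynomials via the Szego recursion.\<close>
fun Phi :: "(nat \<Rightarrow> complex) \<Rightarrow> nat \<Rightarrow> complex poly" where
  "Phi \<alpha> 0 = 1"
| "Phi \<alpha> (Suc n) = [:0, 1:] * Phi \<alpha> n - smult (cnj (\<alpha> n)) (pstar (Phi \<alpha> n))"

text \<open>Laurent polynomials are represented as finitely supported coefficient
  functions int => complex (coefficient of z^k at k).\<close>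
definition laurent :: "(int \<Rightarrow> complex) \<Rightarrow> bool" where
  "laurent u \<longleftrightarrow> finite {k. u k \<noteq> 0}"

definition laurent_one :: "int \<Rightarrow> complex" where
  "laurent_one = (\<lambda>k. if k = 0 then 1 else 0)"

definition laurent_linear :: "((int \<Rightarrow> complex) \<Rightarrow> complex) \<Rightarrow> bool" where
  "laurent_linear L \<longleftrightarrow>
     (\<forall>u v. laurent u \<longrightarrow> laurent v \<longrightarrow> L (\<lambda>k. u k + v k) = L u + L v) \<and>
     (\<forall>a u. laurent u \<longrightarrow> L (\<lambda>k. a * u k) = a * L u)"

text \<open>The Laurent polynomial f(z) * conj-g(1/z), as coefficient function.\<close>
definition lprod :: "complex poly \<Rightarrow> complex poly \<Rightarrow> int \<Rightarrow> complex" where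
  "lprod f g k = (\<Sum>i\<le>degree f. \<Sum>j\<le>degree g.
       if int i - int j = k then coeff f i * cnj (coeff g j) else 0)"

definition linner :: "((int \<Rightarrow> complex) \<Rightarrow> complex) \<Rightarrow> complex poly \<Rightarrow> complex poly \<Rightarrow> complex" where
  "linner L f g = L (lprod f g)"

definition mu :: "((int \<Rightarrow> complex) \<Rightarrow> complex) \<Rightarrow> (nat \<Rightarrow> complex) \<Rightarrow> nat \<Rightarrow> nat \<Rightarrow> nat \<Rightarrow> complex" where
  "mu L \<alpha> n r s = linner L (Phi \<alpha> s) (monom 1 n * Phi \<alpha> r) / linner L (Phi \<alpha> s) (Phi \<alpha> s)"

definition alpha_ext :: "(nat \<Rightarrow> complex) \<Rightarrow> int \<Rightarrow> complex" where
  "alpha_ext \<alpha> k = (if k = -1 then -1 else \<alpha> (nat k))"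

text \<open>Lukasiewicz paths from (0,r) to (n,s), given by their list of heights
  h_0,...,h_n; steps (1,k) with k <= 1.\<close>
definition luk_paths :: "nat \<Rightarrow> nat \<Rightarrow> nat \<Rightarrow> nat list set" where
  "luk_paths n r s = {hs. length hs = Suc n \<and> hs ! 0 = r \<and> hs ! n = s \<and>
       (\<forall>i<n. hs ! Suc i \<le> hs ! i + 1)}"

definition step_wt :: "(nat \<Rightarrow> complex) \<Rightarrow> nat \<Rightarrow> nat \<Rightarrow> complex" where
  "step_wt \<alpha> b b' = (if b' = b + 1 then 1 else
     - \<alpha> b * cnj (alpha_ext \<alpha> (int b' - 1)) *
       (\<Prod>j\<in>{b'..<b}. complex_of_real (1 - (cmod (\<alpha> j))\<^sup>2)))"

definition wt_L :: "(nat \<Rightarrow> complex) \<Rightarrow> nat list \<Rightarrow> complex" where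
  "wt_L \<alpha> hs = (\<Prod>i<length hs - 1. step_wt \<alpha> (hs ! i) (hs ! Suc i))"

end

theory Submission
  imports Defs
begin


lemma X_mult: "[:0, 1:] * (p::complex poly) = pCons 0 p"
  by simp

lemma coeff_pconj[simp]: "coeff (pconj p) n = cnj (coeff p n)"
  by (simp add: pconj_def coeff_map_poly)

lemma degree_pconj[simp]: "degree (pconj p) = degree p"
  unfolding pconj_def by (rule degree_map_poly) simp

lemma pconj_pconj[simp]: "pconj (pconj p) = p"
  by (rule poly_eqI) simp

lemma coeff_pstar: "coeff (pstar p) i = (if i \<le> degree p then cnj (coeff p (degree p - i)) else 0)"
  by (simp add: pstar_def coeff_reflect_poly)

lemma pconj_X_mult: "pconj ([:0,1:] * p) = [:0,1:] * pconj p"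
  by (rule poly_eqI) (simp add: coeff_pCons')

lemma pconj_diff: "pconj (p - q) = pconj p - pconj q"
  by (rule poly_eqI) simp

lemma pconj_smult: "pconj (smult c p) = smult (cnj c) (pconj p)"
  by (rule poly_eqI) simp

lemma pconj_pstar: "pconj (pstar p) = pstar (pconj p)"
  by (rule poly_eqI) (simp add: coeff_pstar)

lemma degree_Phi: "degree (Phi b n) = n \<and> coeff (Phi b n) n = 1"
proof (induction n)
  case 0 then show ?case by simp
next
  case (Suc n)
  let ?p = "Phi b n"
  have d: "degree (pstar ?p) \<le> n" using Suc unfolding pstar_def
    by (metis degree_reflect_poly_le degree_pconj)
  have ds: "degree (smult (cnj (b n)) (pstar ?p)) \<le> n"
    using d degree_smult_le order_trans by blast
  have c1: "coeff (Phi b (Suc n)) (Suc n) = 1"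
    using Suc ds by (simp add: coeff_eq_0 coeff_pstar)
  have "degree (Phi b (Suc n)) \<le> Suc n"
    using Suc ds by (auto intro!: degree_diff_le simp: X_mult degree_pCons_le
      intro: order_trans[OF degree_pCons_le])
  moreover have "degree (Phi b (Suc n)) \<ge> Suc n" using c1 by (simp add: le_degree)
  ultimately have "degree (Phi b (Suc n)) = Suc n" by (rule antisym)
  with c1 show ?case by blast
qed

lemma degree_Phi'[simp]: "degree (Phi b n) = n"
  using degree_Phi by blast

lemma pconj_1[simp]: "pconj 1 = 1"
  by (rule poly_eqI) (simp add: coeff_1)

lemma pconj_Phi: "pconj (Phi b n) = Phi (\<lambda>k. cnj (b k)) n"
  by (induction n) (simp_all add: pconj_diff pconj_smult pconj_X_mult pconj_pstar del: mult_pCons_left)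

lemma pstar_Phi_Suc:
  "pstar (Phi b (Suc t)) = pstar (Phi b t) - smult (b t) ([:0,1:] * Phi b t)"
proof (rule poly_eqI)
  fix i
  have dq: "degree (Phi b (Suc t)) = Suc t" by (rule degree_Phi')
  have cq: "coeff (Phi b (Suc t)) j = (if j = 0 then 0 else coeff (Phi b t) (j-1)) - cnj (b t) * coeff (pstar (Phi b t)) j" for j
    by (simp add: coeff_pCons')
  show "coeff (pstar (Phi b (Suc t))) i = coeff (pstar (Phi b t) - smult (b t) ([:0,1:] * Phi b t)) i"
    apply (subst coeff_pstar)
    apply (simp only: dq cq)
    by (cases i) (auto simp: coeff_pstar coeff_pCons' Suc_diff_le coeff_eq_0)
qed

definition Dc :: "(nat \<Rightarrow> complex) \<Rightarrow> nat \<Rightarrow> nat \<Rightarrow> complex" where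
  "Dc b t u = (if u = 0 then 1 else - b (u-1)) * (\<Prod>j\<in>{u..<t}. complex_of_real (1 - (cmod (b j))\<^sup>2))"

lemma X_Phi: "[:0,1:] * Phi b t = Phi b (Suc t) + smult (cnj (b t)) (pstar (Phi b t))"
  by (simp del: mult_pCons_left)

lemma norm_sq_c: "complex_of_real (1 - (cmod z)\<^sup>2) = 1 - z * cnj z"
  by (simp only: of_real_diff of_real_1 complex_norm_square)

lemma smult_sum2: "smult a (\<Sum>i\<in>S. f i) = (\<Sum>i\<in>S. smult a (f i))"
  by (induction S rule: infinite_finite_induct) (simp_all add: smult_add_right)

lemma pstar_Phi_exp: "pstar (Phi b t) = (\<Sum>u\<le>t. smult (Dc b t u) (Phi b u))"
proof (induction t)
  case 0
  have "pstar 1 = 1" by (simp add: pstar_def)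
  then show ?case by (simp add: Dc_def)
next
  case (Suc t)
  let ?q = "complex_of_real (1 - (cmod (b t))\<^sup>2)"
  have "pstar (Phi b (Suc t)) = pstar (Phi b t) - smult (b t) ([:0,1:] * Phi b t)"
    by (rule pstar_Phi_Suc)
  also have "\<dots> = smult ?q (pstar (Phi b t)) + smult (- b t) (Phi b (Suc t))"
    unfolding X_Phi norm_sq_c smult_add_right smult_diff_left by (simp add: algebra_simps del: Phi.simps)
  also have "\<dots> = (\<Sum>u\<le>t. smult (Dc b (Suc t) u) (Phi b u)) + smult (Dc b (Suc t) (Suc t)) (Phi b (Suc t))"
  proof -
    have "smult ?q (pstar (Phi b t)) = (\<Sum>u\<le>t. smult (Dc b (Suc t) u) (Phi b u))"
      unfolding Suc smult_sum2
    proof (rule sum.cong)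
      fix u assume "u \<in> {..t}"
      then have "Dc b (Suc t) u = ?q * Dc b t u"
        by (simp add: Dc_def prod.atLeastLessThan_Suc)
      then show "smult ?q (smult (Dc b t u) (Phi b u)) = smult (Dc b (Suc t) u) (Phi b u)" by simp
    qed simp
    moreover have "Dc b (Suc t) (Suc t) = - b t" by (simp add: Dc_def)
    ultimately show ?thesis by simp
  qed
  also have "\<dots> = (\<Sum>u\<le>Suc t. smult (Dc b (Suc t) u) (Phi b u))" by simp
  finally show ?case .
qed

definition Wc :: "(nat \<Rightarrow> complex) \<Rightarrow> nat \<Rightarrow> nat \<Rightarrow> complex" where
  "Wc b t u = (if u = Suc t then 1 else cnj (b t) * Dc b t u)"

lemma X_Phi_exp: "[:0,1:] * Phi b t = (\<Sum>u\<le>Suc t. smult (Wc b t u) (Phi b u))"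
proof -
  have "(\<Sum>u\<le>Suc t. smult (Wc b t u) (Phi b u)) = (\<Sum>u\<le>t. smult (Wc b t u) (Phi b u)) + Phi b (Suc t)"
    by (simp add: Wc_def del: Phi.simps)
  also have "(\<Sum>u\<le>t. smult (Wc b t u) (Phi b u)) = smult (cnj (b t)) (pstar (Phi b t))"
    unfolding pstar_Phi_exp smult_sum2 by (rule sum.cong) (auto simp: Wc_def)
  finally show ?thesis unfolding X_Phi by simp
qed



fun Pr :: "(nat \<Rightarrow> complex) \<Rightarrow> nat \<Rightarrow> nat \<Rightarrow> nat \<Rightarrow> complex" where
  "Pr a 0 r t = (if t = r then 1 else 0)"
| "Pr a (Suc n) r u = (\<Sum>t\<le>r+n. Pr a n r t * (if u \<le> Suc t then step_wt a t u else 0))"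

lemma luk_bound: "hs \<in> luk_paths n r s \<Longrightarrow> i \<le> n \<Longrightarrow> hs ! i \<le> r + i"
proof (induction i)
  case 0 then show ?case by (simp add: luk_paths_def)
next
  case (Suc i)
  then have "hs ! Suc i \<le> hs ! i + 1" by (simp add: luk_paths_def)
  with Suc show ?case by simp
qed

lemma luk_finite: "finite (luk_paths n r s)"
proof (rule finite_subset)
  show "luk_paths n r s \<subseteq> {xs. set xs \<subseteq> {..r+n} \<and> length xs = Suc n}"
  proof (rule subsetI)
    fix xs assume xs: "xs \<in> luk_paths n r s"
    have l: "length xs = Suc n" using xs by (simp add: luk_paths_def)
    have "x \<in> {..r+n}" if xin: "x \<in> set xs" for x
    proof -
      obtain i where "i < length xs" "xs ! i = x" using xin by (auto simp: in_set_conv_nth)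
      then show ?thesis using luk_bound[OF xs, of i] l by auto
    qed
    then show "xs \<in> {xs. set xs \<subseteq> {..r+n} \<and> length xs = Suc n}" using l by auto
  qed
  show "finite {xs. set xs \<subseteq> {..r+n} \<and> length xs = Suc n}"
    by (rule finite_lists_length_eq) simp
qed

lemma luk_0: "luk_paths 0 r t = (if t = r then {[r]} else {})"
proof -
  have "luk_paths 0 r t = {hs. length hs = 1 \<and> hs ! 0 = r \<and> hs ! 0 = t}"
    by (simp add: luk_paths_def)
  also have "\<dots> = (if t = r then {[r]} else {})"
  proof (cases "t = r")
    case True
    have "hs = [r]" if "length hs = 1" "hs ! 0 = r" for hs :: "nat list"
      using that by (cases hs) auto
    then show ?thesis using True by auto
  qed auto
  finally show ?thesis .
qed

definition luk_all :: "nat \<Rightarrow> nat \<Rightarrow> nat \<Rightarrow> nat list set" where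
  "luk_all n r s = {hs. length hs = Suc n \<and> hs ! 0 = r \<and> (\<forall>i<n. hs ! Suc i \<le> hs ! i + 1) \<and> s \<le> Suc (hs ! n)}"

lemma luk_Suc: "luk_paths (Suc n) r s = (\<lambda>p. p @ [s]) ` luk_all n r s"
proof safe
  fix q assume q: "q \<in> luk_paths (Suc n) r s"
  then have lq: "length q = Suc (Suc n)" by (simp add: luk_paths_def)
  let ?p = "butlast q"
  have qe: "q = ?p @ [s]"
  proof -
    have "q \<noteq> []" using lq by auto
    then have "q = ?p @ [last q]" by simp
    moreover have "last q = q ! Suc n" using lq \<open>q \<noteq> []\<close> by (simp add: last_conv_nth)
    moreover have "q ! Suc n = s" using q by (simp add: luk_paths_def)
    ultimately show ?thesis by simp
  qed
  have lp: "length ?p = Suc n" using lq by simp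
  have nth: "i < Suc n \<Longrightarrow> ?p ! i = q ! i" for i using lp by (simp add: nth_butlast)
  have "?p \<in> luk_all n r s"
  proof -
    have q0: "q ! 0 = r" and qs: "q ! Suc n = s" and qst: "\<And>i. i < Suc n \<Longrightarrow> q ! Suc i \<le> q ! i + 1"
      using q by (auto simp: luk_paths_def)
    have "\<forall>i<n. ?p ! Suc i \<le> ?p ! i + 1"
      using qst nth by simp
    moreover have "s \<le> Suc (?p ! n)" using qst[of n] qs nth[of n] by simp
    moreover have "?p ! 0 = r" using q0 nth[of 0] by simp
    ultimately show ?thesis unfolding luk_all_def using lp by simp
  qed
  then show "q \<in> (\<lambda>p. p @ [s]) ` luk_all n r s" using qe by blast
next
  fix p assume p: "p \<in> luk_all n r s"
  then have lp: "length p = Suc n" by (simp add: luk_all_def)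
  show "p @ [s] \<in> luk_paths (Suc n) r s"
  proof -
    have p0: "p ! 0 = r" and ps: "s \<le> Suc (p ! n)" and pst: "\<And>i. i < n \<Longrightarrow> p ! Suc i \<le> p ! i + 1"
      using p by (auto simp: luk_all_def)
    have "(p @ [s]) ! Suc i \<le> (p @ [s]) ! i + 1" if "i < Suc n" for i
    proof (cases "i < n")
      case True then show ?thesis using pst[of i] lp by (simp add: nth_append)
    next
      case False then have "i = n" using that by simp
      then show ?thesis using ps lp by (simp add: nth_append)
    qed
    then show ?thesis unfolding luk_paths_def using lp p0 by (simp add: nth_append)
  qed
qed

lemma wt_snoc: "length p = Suc n \<Longrightarrow> wt_L a (p @ [s]) = wt_L a p * step_wt a (p ! n) s"
  by (simp add: wt_L_def nth_append lessThan_Suc)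

lemma luk_all_sub: "luk_all n r s \<subseteq> (\<Union>t\<le>r+n. luk_paths n r t)"
proof
  fix p assume p: "p \<in> luk_all n r s"
  then have "p \<in> luk_paths n r (p ! n)" by (simp add: luk_all_def luk_paths_def)
  moreover have "p ! n \<le> r + n" using luk_bound[OF calculation, of n] by simp
  ultimately show "p \<in> (\<Union>t\<le>r+n. luk_paths n r t)" by blast
qed

lemma luk_all_finite: "finite (luk_all n r s)"
  using luk_all_sub by (rule finite_subset) (simp add: luk_finite)

lemma path_sum: "(\<Sum>p\<in>luk_paths n r s. wt_L a p) = Pr a n r s"
proof (induction n arbitrary: s)
  case 0 then show ?case by (simp add: luk_0 wt_L_def)
next
  case (Suc n)
  have inj: "inj_on (\<lambda>p. p @ [s]) (luk_all n r s)" by (auto intro: inj_onI)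
  have "(\<Sum>p\<in>luk_paths (Suc n) r s. wt_L a p) = (\<Sum>p\<in>luk_all n r s. wt_L a (p @ [s]))"
    unfolding luk_Suc by (simp add: sum.reindex[OF inj])
  also have "\<dots> = (\<Sum>p\<in>luk_all n r s. wt_L a p * step_wt a (p ! n) s)"
    by (rule sum.cong) (auto simp: luk_all_def wt_snoc)
  also have "\<dots> = (\<Sum>t\<le>r+n. \<Sum>p\<in>{p \<in> luk_all n r s. p ! n = t}. wt_L a p * step_wt a (p ! n) s)"
  proof (rule sum.group[symmetric])
    show "finite (luk_all n r s)" by (rule luk_all_finite)
    show "(\<lambda>p. p ! n) ` luk_all n r s \<subseteq> {..r+n}"
    proof (rule image_subsetI)
      fix p assume "p \<in> luk_all n r s"
      then have "p \<in> luk_paths n r (p ! n)" by (simp add: luk_all_def luk_paths_def)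
      then show "p ! n \<in> {..r+n}" using luk_bound[of p n r "p ! n" n] by simp
    qed
  qed simp
  also have "\<dots> = (\<Sum>t\<le>r+n. Pr a n r t * (if s \<le> Suc t then step_wt a t s else 0))"
  proof (rule sum.cong)
    fix t assume "t \<in> {..r+n}"
    have e: "{p \<in> luk_all n r s. p ! n = t} = (if s \<le> Suc t then luk_paths n r t else {})"
      unfolding luk_all_def luk_paths_def by auto
    show "(\<Sum>p\<in>{p \<in> luk_all n r s. p ! n = t}. wt_L a p * step_wt a (p ! n) s) =
          Pr a n r t * (if s \<le> Suc t then step_wt a t s else 0)"
    proof (cases "s \<le> Suc t")
      case True
      have "(\<Sum>p\<in>luk_paths n r t. wt_L a p * step_wt a (p ! n) s) = (\<Sum>p\<in>luk_paths n r t. wt_L a p * step_wt a t s)"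
        by (rule sum.cong) (auto simp: luk_paths_def)
      also have "\<dots> = Pr a n r t * step_wt a t s" using Suc.IH[of t] by (simp add: sum_distrib_right[symmetric])
      finally show ?thesis unfolding e using True by simp
    qed (simp add: e)
  qed simp
  finally show ?case by simp
qed



lemma Wc_step: "u \<le> Suc t \<Longrightarrow> Wc (\<lambda>k. cnj (a k)) t u = step_wt a t u"
  by (auto simp: Wc_def Dc_def step_wt_def alpha_ext_def nat_diff_distrib')

lemma monom_Suc_mult: "monom 1 (Suc n) * p = [:0,1:] * (monom 1 n * (p::complex poly))"
  by (rule poly_eqI) (auto simp: coeff_monom_mult coeff_pCons')

lemma expansion:
  "monom 1 n * Phi (\<lambda>k. cnj (a k)) r = (\<Sum>t\<le>r+n. smult (Pr a n r t) (Phi (\<lambda>k. cnj (a k)) t))"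
proof (induction n)
  case 0
  have "(\<Sum>t\<le>r. smult (Pr a 0 r t) (Phi (\<lambda>k. cnj (a k)) t)) = (\<Sum>t\<le>r. if t = r then Phi (\<lambda>k. cnj (a k)) t else 0)"
    by (rule sum.cong) auto
  also have "\<dots> = Phi (\<lambda>k. cnj (a k)) r" by (simp add: sum.delta)
  finally show ?case by simp
next
  case (Suc n)
  let ?b = "\<lambda>k. cnj (a k)"
  have "monom 1 (Suc n) * Phi ?b r = [:0,1:] * (\<Sum>t\<le>r+n. smult (Pr a n r t) (Phi ?b t))"
    by (simp only: monom_Suc_mult Suc)
  also have "\<dots> = (\<Sum>t\<le>r+n. smult (Pr a n r t) ([:0,1:] * Phi ?b t))"
    by (simp only: sum_distrib_left mult_smult_right)
  also have "\<dots> = (\<Sum>t\<le>r+n. \<Sum>u\<le>Suc (r+n). smult (Pr a n r t * (if u \<le> Suc t then step_wt a t u else 0)) (Phi ?b u))"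
  proof (rule sum.cong)
    fix t assume t: "t \<in> {..r+n}"
    have "smult (Pr a n r t) ([:0,1:] * Phi ?b t) = (\<Sum>u\<le>Suc t. smult (Pr a n r t * step_wt a t u) (Phi ?b u))"
      unfolding X_Phi_exp smult_sum2 by (rule sum.cong) (auto simp: Wc_step)
    also have "\<dots> = (\<Sum>u\<le>Suc (r+n). smult (Pr a n r t * (if u \<le> Suc t then step_wt a t u else 0)) (Phi ?b u))"
      by (rule sum.mono_neutral_cong_left) (use t in auto)
    finally show "smult (Pr a n r t) ([:0,1:] * Phi ?b t) = \<dots>" .
  qed simp
  also have "\<dots> = (\<Sum>u\<le>Suc (r+n). \<Sum>t\<le>r+n. smult (Pr a n r t * (if u \<le> Suc t then step_wt a t u else 0)) (Phi ?b u))"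
    by (rule sum.swap)
  also have "\<dots> = (\<Sum>u\<le>r + Suc n. smult (Pr a (Suc n) r u) (Phi ?b u))"
    by (simp add: smult_sum del: Phi.simps)
  finally show ?case .
qed

lemma Pr_zero: "r + n < t \<Longrightarrow> Pr a n r t = 0"
  by (induction n arbitrary: t) auto



definition lpN :: "nat \<Rightarrow> complex poly \<Rightarrow> complex poly \<Rightarrow> int \<Rightarrow> complex" where
  "lpN N f h k = (\<Sum>i\<le>N. \<Sum>j\<le>N. if int i - int j = k then coeff f i * coeff h j else 0)"

lemma ext_sum:
  fixes F :: "nat \<Rightarrow> nat \<Rightarrow> complex"
  assumes "A \<le> N" "B \<le> N" "\<And>i j. A < i \<or> B < j \<Longrightarrow> F i j = 0"
  shows "(\<Sum>i\<le>A. \<Sum>j\<le>B. F i j) = (\<Sum>i\<le>N. \<Sum>j\<le>N. F i j)"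
proof -
  have "(\<Sum>i\<le>A. \<Sum>j\<le>B. F i j) = (\<Sum>i\<le>A. \<Sum>j\<le>N. F i j)"
    by (rule sum.cong[OF refl], rule sum.mono_neutral_left) (use assms in auto)
  also have "\<dots> = (\<Sum>i\<le>N. \<Sum>j\<le>N. F i j)"
    by (rule sum.mono_neutral_left) (use assms in auto)
  finally show ?thesis .
qed

lemma lprod_lpN: "degree f \<le> N \<Longrightarrow> degree g \<le> N \<Longrightarrow> lprod f g = lpN N f (pconj g)"
  unfolding lprod_def lpN_def coeff_pconj
  apply (rule ext)
  apply (rule ext_sum)
  by (auto simp: coeff_eq_0)

lemma lpN_indep: "degree f \<le> N \<Longrightarrow> degree h \<le> N \<Longrightarrow> N \<le> M \<Longrightarrow> lpN M f h = lpN N f h"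
  unfolding lpN_def
  by (rule ext, rule ext_sum[symmetric]) (auto simp: coeff_eq_0)

lemma laurent_lpN: "laurent (lpN N f h)"
  unfolding laurent_def
proof (rule finite_subset)
  show "{k. lpN N f h k \<noteq> 0} \<subseteq> {- int N..int N}"
  proof
    fix k assume "k \<in> {k. lpN N f h k \<noteq> 0}"
    then have nz: "lpN N f h k \<noteq> 0" by simp
    show "k \<in> {- int N..int N}"
    proof (rule ccontr)
      assume "k \<notin> {- int N..int N}"
      then have "\<And>i j. i \<le> N \<Longrightarrow> j \<le> N \<Longrightarrow> int i - int j \<noteq> k" by auto
      then have "lpN N f h k = 0" unfolding lpN_def by simp
      with nz show False by simp
    qed
  qed
qed simp

lemma laurent_add: "laurent u \<Longrightarrow> laurent v \<Longrightarrow> laurent (\<lambda>k. u k + v k)"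
  unfolding laurent_def
  by (rule finite_subset[of _ "{k. u k \<noteq> 0} \<union> {k. v k \<noteq> 0}"]) auto

lemma laurent_smult: "laurent u \<Longrightarrow> laurent (\<lambda>k. a * u k)"
  unfolding laurent_def
  by (rule finite_subset[of _ "{k. u k \<noteq> 0}"]) auto

lemma laurent_zero: "laurent (\<lambda>k. 0)"
  by (simp add: laurent_def)

lemma L_zero: "laurent_linear L \<Longrightarrow> L (\<lambda>k. 0) = 0"
proof -
  assume "laurent_linear L"
  then have "L (\<lambda>k. 0 * (0::complex)) = 0 * L (\<lambda>k. 0)"
    unfolding laurent_linear_def using laurent_zero by blast
  then show ?thesis by simp
qed

lemma laurent_sum: "finite U \<Longrightarrow> (\<And>u. u \<in> U \<Longrightarrow> laurent (g u)) \<Longrightarrow> laurent (\<lambda>k. \<Sum>u\<in>U. c u * g u k)"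
proof (induction U rule: finite_induct)
  case empty then show ?case by (simp add: laurent_zero)
next
  case (insert x F)
  then show ?case by (simp add: laurent_add laurent_smult)
qed

lemma L_sum:
  assumes "laurent_linear L" "finite U" "\<And>u. u \<in> U \<Longrightarrow> laurent (g u)"
  shows "L (\<lambda>k. \<Sum>u\<in>U. c u * g u k) = (\<Sum>u\<in>U. c u * L (g u))"
  using assms(2,3)
proof (induction U rule: finite_induct)
  case empty then show ?case using L_zero[OF assms(1)] by simp
next
  case (insert x F)
  have "L (\<lambda>k. \<Sum>u\<in>insert x F. c u * g u k) = L (\<lambda>k. c x * g x k + (\<Sum>u\<in>F. c u * g u k))"
    using insert by simp
  also have "\<dots> = L (\<lambda>k. c x * g x k) + L (\<lambda>k. \<Sum>u\<in>F. c u * g u k)"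
    using assms(1) insert laurent_sum[of F g c] laurent_smult[of "g x" "c x"]
    unfolding laurent_linear_def by simp
  also have "L (\<lambda>k. c x * g x k) = c x * L (g x)"
    using assms(1) insert unfolding laurent_linear_def by simp
  finally show ?case using insert by simp
qed

lemma if_add_c: "(if P then a * (b + c) else 0) = (if P then a * b else 0) + (if P then (a::complex) * c else 0)"
  by (simp add: distrib_left)
lemma if_add_c2: "(if P then (b + c) * a else 0) = (if P then b * a else 0) + (if P then c * (a::complex) else 0)"
  by (simp add: distrib_right)
lemma if_mult_c: "(if P then a * (c * b) else 0) = c * (if P then a * b else (0::complex))"
  by simp
lemma if_mult_c2: "(if P then (c * b) * a else 0) = c * (if P then b * a else (0::complex))"
  by simp

lemma lpN_add_right: "lpN N f (p + q) k = lpN N f p k + lpN N f q k"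
  unfolding lpN_def coeff_add if_add_c sum.distrib ..
lemma lpN_add_left: "lpN N (p + q) f k = lpN N p f k + lpN N q f k"
  unfolding lpN_def coeff_add if_add_c2 sum.distrib ..
lemma lpN_smult_right: "lpN N f (smult c p) k = c * lpN N f p k"
  unfolding lpN_def coeff_smult if_mult_c sum_distrib_left ..
lemma lpN_smult_left: "lpN N (smult c p) f k = c * lpN N p f k"
  unfolding lpN_def coeff_smult if_mult_c2 sum_distrib_left ..
lemma lpN_zero_right: "lpN N f 0 k = 0"
  unfolding lpN_def coeff_0 by (simp only: mult_zero_right if_cancel sum.neutral_const)
lemma lpN_zero_left: "lpN N 0 f k = 0"
  unfolding lpN_def coeff_0 by (simp only: mult_zero_left if_cancel sum.neutral_const)

lemma lpN_sum_right: "finite U \<Longrightarrow> lpN N f (\<Sum>u\<in>U. smult (c u) (h u)) = (\<lambda>k. \<Sum>u\<in>U. c u * lpN N f (h u) k)"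
proof (induction U rule: finite_induct)
  case empty show ?case by (rule ext) (simp add: lpN_zero_right)
next
  case (insert x F) then show ?case by (intro ext) (simp add: lpN_add_right lpN_smult_right)
qed

lemma lpN_sum_left: "finite U \<Longrightarrow> lpN N (\<Sum>u\<in>U. smult (c u) (h u)) f = (\<lambda>k. \<Sum>u\<in>U. c u * lpN N (h u) f k)"
proof (induction U rule: finite_induct)
  case empty show ?case by (rule ext) (simp add: lpN_zero_left)
next
  case (insert x F) then show ?case by (intro ext) (simp add: lpN_add_left lpN_smult_left)
qed



lemma lpN_shift: "lpN (Suc M) ([:0,1:] * f) ([:0,1:] * h) k = lpN M f h k"
  unfolding X_mult lpN_def sum.atMost_Suc_shift coeff_pCons_0 coeff_pCons_Suc mult_zero_left mult_zero_right
    if_cancel sum.neutral_const add_0_left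
  by (rule sum.cong[OF refl], rule sum.cong[OF refl]) auto

lemma sum_rev_atMost: "(\<Sum>i\<le>N. g (N - i)) = (\<Sum>i\<le>(N::nat). (g i :: complex))"
  using sum.nat_diff_reindex[of g "Suc N"] by (simp add: lessThan_Suc_atMost)

lemma lpN_reflect:
  assumes "degree a = N" "degree b = N"
  shows "lpN N (reflect_poly a) (reflect_poly b) k = lpN N b a k"
proof -
  define G where "G i j = (if int j - int i = k then coeff a i * coeff b j else 0)" for i j
  have "lpN N (reflect_poly a) (reflect_poly b) k = (\<Sum>i\<le>N. \<Sum>j\<le>N. G (N - i) (N - j))"
    unfolding lpN_def
    by (rule sum.cong[OF refl], rule sum.cong[OF refl]) (auto simp: G_def coeff_reflect_poly assms of_nat_diff)
  also have "\<dots> = (\<Sum>i\<le>N. \<Sum>j\<le>N. G (N - i) j)"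
    by (rule sum.cong[OF refl]) (rule sum_rev_atMost)
  also have "\<dots> = (\<Sum>i\<le>N. \<Sum>j\<le>N. G i j)"
    by (rule sum_rev_atMost[where g = "\<lambda>i. \<Sum>j\<le>N. G i j"])
  also have "\<dots> = (\<Sum>j\<le>N. \<Sum>i\<le>N. G i j)"
    by (rule sum.swap)
  also have "\<dots> = lpN N b a k"
    unfolding lpN_def G_def by (rule sum.cong[OF refl], rule sum.cong[OF refl]) (auto simp: mult.commute)
  finally show ?thesis .
qed

lemma KL_add_sm_right:
  assumes "laurent_linear L"
  shows "L (lpN M f (p + smult c q)) = L (lpN M f p) + c * L (lpN M f q)"
proof -
  have "lpN M f (p + smult c q) = (\<lambda>k. lpN M f p k + (\<lambda>k. c * lpN M f q k) k)"
    by (rule ext) (simp add: lpN_add_right lpN_smult_right)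
  then show ?thesis using assms laurent_lpN laurent_smult unfolding laurent_linear_def by simp
qed

lemma KL_add_sm_left:
  assumes "laurent_linear L"
  shows "L (lpN M (p + smult c q) f) = L (lpN M p f) + c * L (lpN M q f)"
proof -
  have "lpN M (p + smult c q) f = (\<lambda>k. lpN M p f k + (\<lambda>k. c * lpN M q f k) k)"
    by (rule ext) (simp add: lpN_add_left lpN_smult_left)
  then show ?thesis using assms laurent_lpN laurent_smult unfolding laurent_linear_def by simp
qed

lemma KL_sum_right:
  assumes "laurent_linear L" "finite U"
  shows "L (lpN M f (\<Sum>u\<in>U. smult (c u) (h u))) = (\<Sum>u\<in>U. c u * L (lpN M f (h u)))"
  unfolding lpN_sum_right[OF assms(2)] by (rule L_sum[OF assms]) (rule laurent_lpN)

lemma KL_sum_left: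
  assumes "laurent_linear L" "finite U"
  shows "L (lpN M (\<Sum>u\<in>U. smult (c u) (h u)) f) = (\<Sum>u\<in>U. c u * L (lpN M (h u) f))"
  unfolding lpN_sum_left[OF assms(2)] by (rule L_sum[OF assms]) (rule laurent_lpN)

lemma diff_as_add: "p - smult c q = p + smult (- c) (q :: complex poly)"
  by simp



definition kap :: "((int \<Rightarrow> complex) \<Rightarrow> complex) \<Rightarrow> (nat \<Rightarrow> complex) \<Rightarrow> nat \<Rightarrow> complex" where
  "kap L a s = L (lpN s (Phi a s) (Phi (\<lambda>k. cnj (a k)) s))"

lemma kap_N: "s \<le> N \<Longrightarrow> L (lpN N (Phi a s) (Phi (\<lambda>k. cnj (a k)) s)) = kap L a s"
  unfolding kap_def by (subst lpN_indep[of _ s]) auto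

lemma orthN:
  assumes L_orth: "\<And>m k. m \<noteq> k \<Longrightarrow> linner L (Phi a m) (Phi a k) = 0"
    and "s \<noteq> t" "s \<le> N" "t \<le> N"
  shows "L (lpN N (Phi a s) (Phi (\<lambda>k. cnj (a k)) t)) = 0"
proof -
  have "linner L (Phi a s) (Phi a t) = L (lpN N (Phi a s) (pconj (Phi a t)))"
    unfolding linner_def using assms by (subst lprod_lpN[of _ N]) auto
  then show ?thesis using L_orth[OF assms(2)] by (simp add: pconj_Phi del: Phi.simps)
qed

lemma kap_Suc:
  assumes LL: "laurent_linear L"
    and L_orth: "\<And>m k. m \<noteq> k \<Longrightarrow> linner L (Phi a m) (Phi a k) = 0"
  shows "kap L a (Suc n) = (1 - a n * cnj (a n)) * kap L a n"
proof -
  define b where "b = (\<lambda>k. cnj (a k))"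
  define M where "M = Suc (Suc n)"
  let ?K = "\<lambda>f h. L (lpN M f h)"
  have orth: "s \<noteq> t \<Longrightarrow> s \<le> M \<Longrightarrow> t \<le> M \<Longrightarrow> ?K (Phi a s) (Phi b t) = 0" for s t
    unfolding b_def by (rule orthN[OF L_orth])
  have psi_Suc: "Phi b (Suc n) = [:0,1:] * Phi b n + smult (- a n) (pstar (Phi b n))"
    by (simp add: b_def del: mult_pCons_left)
  have phi_Suc: "Phi a (Suc n) = [:0,1:] * Phi a n + smult (- cnj (a n)) (pstar (Phi a n))"
    by (simp del: mult_pCons_left)
  have Xpsi: "[:0,1:] * Phi b n = Phi b (Suc n) + smult (a n) (pstar (Phi b n))"
    unfolding X_Phi by (simp add: b_def del: Phi.simps)
  have z1: "?K (Phi a (Suc n)) (pstar (Phi b n)) = 0"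
  proof -
    have "?K (Phi a (Suc n)) (pstar (Phi b n)) = (\<Sum>u\<le>n. Dc b n u * ?K (Phi a (Suc n)) (Phi b u))"
      unfolding pstar_Phi_exp[of b n] by (rule KL_sum_right[OF LL]) simp
    also have "\<dots> = 0" using orth by (auto simp: M_def simp del: Phi.simps intro!: sum.neutral)
    finally show ?thesis .
  qed
  have z2: "?K (pstar (Phi a n)) (Phi b (Suc n)) = 0"
  proof -
    have "?K (pstar (Phi a n)) (Phi b (Suc n)) = (\<Sum>u\<le>n. Dc a n u * ?K (Phi a u) (Phi b (Suc n)))"
      unfolding pstar_Phi_exp[of a n] by (rule KL_sum_left[OF LL]) simp
    also have "\<dots> = 0" using orth by (auto simp: M_def simp del: Phi.simps intro!: sum.neutral)
    finally show ?thesis .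
  qed
  have sh: "?K ([:0,1:] * Phi a n) ([:0,1:] * Phi b n) = kap L a n"
    unfolding M_def lpN_shift b_def by (rule kap_N) simp
  have rf: "?K (pstar (Phi a n)) (pstar (Phi b n)) = kap L a n"
  proof -
    have e1: "pstar (Phi a n) = reflect_poly (Phi b n)"
      unfolding pstar_def b_def pconj_Phi ..
    have e2: "pstar (Phi b n) = reflect_poly (Phi a n)"
      unfolding pstar_def b_def pconj_Phi by simp
    have "?K (pstar (Phi a n)) (pstar (Phi b n)) = L (lpN n (reflect_poly (Phi b n)) (reflect_poly (Phi a n)))"
      unfolding e1 e2 M_def
      by (subst lpN_indep[of _ n]) (auto intro: order_trans[OF degree_reflect_poly_le])
    also have "\<dots> = L (lpN n (Phi a n) (Phi b n))"
    proof -
      have "lpN n (reflect_poly (Phi b n)) (reflect_poly (Phi a n)) = lpN n (Phi a n) (Phi b n)"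
        by (rule ext, rule lpN_reflect) simp_all
      then show ?thesis by simp
    qed
    finally show ?thesis unfolding kap_def b_def .
  qed
  have "kap L a (Suc n) = ?K (Phi a (Suc n)) (Phi b (Suc n))"
    unfolding b_def by (rule kap_N[symmetric]) (simp add: M_def)
  also have "\<dots> = ?K (Phi a (Suc n)) ([:0,1:] * Phi b n)"
    unfolding psi_Suc[of] KL_add_sm_right[OF LL] using z1 by simp
  also have "\<dots> = ?K ([:0,1:] * Phi a n) ([:0,1:] * Phi b n) - cnj (a n) * ?K (pstar (Phi a n)) ([:0,1:] * Phi b n)"
    unfolding phi_Suc KL_add_sm_left[OF LL] by simp
  also have "?K (pstar (Phi a n)) ([:0,1:] * Phi b n) = a n * kap L a n"
    unfolding Xpsi KL_add_sm_right[OF LL] z2 rf by simp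
  finally show ?thesis unfolding sh by (simp add: algebra_simps)
qed



lemma lpN_one: "lpN 0 1 1 = laurent_one"
  by (rule ext) (simp add: lpN_def laurent_one_def)

lemma kap_prod:
  assumes LL: "laurent_linear L" and L1: "L laurent_one = 1"
    and L_orth: "\<And>m k. m \<noteq> k \<Longrightarrow> linner L (Phi a m) (Phi a k) = 0"
  shows "kap L a s = (\<Prod>j<s. 1 - a j * cnj (a j))"
proof (induction s)
  case 0 then show ?case by (simp add: kap_def lpN_one L1)
next
  case (Suc s) then show ?case by (simp add: kap_Suc[OF LL L_orth] del: Phi.simps)
qed

lemma kap_nz:
  assumes LL: "laurent_linear L" and L1: "L laurent_one = 1"
    and L_orth: "\<And>m k. m \<noteq> k \<Longrightarrow> linner L (Phi a m) (Phi a k) = 0"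
    and ab: "\<And>k. cmod (a k) < 1"
  shows "kap L a s \<noteq> 0"
proof -
  have "1 - a j * cnj (a j) \<noteq> 0" for j
  proof -
    have "(cmod (a j))\<^sup>2 < 1" using ab[of j] norm_ge_zero
      by (metis abs_of_nonneg abs_square_less_1)
    then have "1 - (cmod (a j))\<^sup>2 \<noteq> 0" by linarith
    then have "complex_of_real (1 - (cmod (a j))\<^sup>2) \<noteq> 0" using of_real_eq_0_iff by blast
    then show ?thesis unfolding norm_sq_c .
  qed
  then have "(\<Prod>j<s. 1 - a j * cnj (a j)) \<noteq> 0" by (simp add: prod_zero_iff)
  then show ?thesis using kap_prod[OF LL L1 L_orth, of s] by simp
qed

lemma pconj_monom_mult: "pconj (monom 1 n * p) = monom 1 n * pconj p"
  by (rule poly_eqI) (simp add: coeff_monom_mult)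

theorem theorem3p4:
  fixes \<alpha> :: "nat \<Rightarrow> complex"
    and L :: "(int \<Rightarrow> complex) \<Rightarrow> complex"
  assumes alpha_bound: "\<And>k. cmod (\<alpha> k) < 1"
    and L_linear: "laurent_linear L"
    and L_one: "L laurent_one = 1"
    and L_orth: "\<And>m k. m \<noteq> k \<Longrightarrow> linner L (Phi \<alpha> m) (Phi \<alpha> k) = 0"
  shows "mu L \<alpha> n r s = (\<Sum>p\<in>luk_paths n r s. wt_L \<alpha> p)"
proof -
  define b where "b = (\<lambda>k. cnj (\<alpha> k))"
  define M where "M = max s (r + n)"
  have den: "linner L (Phi \<alpha> s) (Phi \<alpha> s) = kap L \<alpha> s"
    unfolding linner_def kap_def by (subst lprod_lpN[of _ s]) (simp_all add: pconj_Phi del: Phi.simps)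
  have dm: "degree (monom 1 n * Phi \<alpha> r) \<le> M"
    using degree_mult_le[of "monom (1::complex) n" "Phi \<alpha> r"] degree_monom_le[of "1::complex" n]
    unfolding M_def by simp
  have "linner L (Phi \<alpha> s) (monom 1 n * Phi \<alpha> r) = L (lpN M (Phi \<alpha> s) (monom 1 n * Phi b r))"
    unfolding linner_def using dm
    by (subst lprod_lpN[of _ M]) (simp_all add: M_def pconj_monom_mult pconj_Phi b_def del: Phi.simps)
  also have "\<dots> = L (lpN M (Phi \<alpha> s) (\<Sum>t\<le>r+n. smult (Pr \<alpha> n r t) (Phi b t)))"
    unfolding b_def expansion ..
  also have "\<dots> = (\<Sum>t\<le>r+n. Pr \<alpha> n r t * L (lpN M (Phi \<alpha> s) (Phi b t)))"
    by (rule KL_sum_right[OF L_linear]) simp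
  also have "\<dots> = (\<Sum>t\<le>r+n. if t = s then Pr \<alpha> n r s * kap L \<alpha> s else 0)"
  proof (rule sum.cong[OF refl])
    fix t assume t: "t \<in> {..r+n}"
    show "Pr \<alpha> n r t * L (lpN M (Phi \<alpha> s) (Phi b t)) = (if t = s then Pr \<alpha> n r s * kap L \<alpha> s else 0)"
    proof (cases "t = s")
      case True then show ?thesis using kap_N[of s M L \<alpha>] by (simp add: M_def b_def del: Phi.simps)
    next
      case False then show ?thesis using orthN[OF L_orth, of s t M] t by (simp add: M_def b_def del: Phi.simps)
    qed
  qed
  also have "\<dots> = Pr \<alpha> n r s * kap L \<alpha> s"
    using Pr_zero[of r n s \<alpha>] by (simp add: sum.delta')
  finally have num: "linner L (Phi \<alpha> s) (monom 1 n * Phi \<alpha> r) = Pr \<alpha> n r s * kap L \<alpha> s" .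
  have "kap L \<alpha> s \<noteq> 0" by (rule kap_nz[OF L_linear L_one L_orth alpha_bound])
  then have "mu L \<alpha> n r s = Pr \<alpha> n r s"
    unfolding mu_def num den by simp
  then show ?thesis by (simp add: path_sum)
qed

end
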